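(* Let $L_1,\dots,L_m>0$ and $L=\sum_{i=1}^m L_i$. Let $\Gamma$ be the chain of loops with vertices $w_0,w_1,\dots,w_m$ where, for each $i$, $w_{i-1}$ and $w_i$ are joined by two parallel edges each of length $L_i/2$ (so the $i$-th loop has length $L_i$). Then the Titchmarsh–Weil $M$-function of $\Gamma$ at the end vertex $w_0$ (with all other vertices, including $w_m$, interior) depends only on $L$ and coincides with the $M$-function of a loop of length $L$ at any of its points. *)

theory Defs
  imports "HOL-Analysis.Analysis"
begin

text \<open>Edge e is identified with the
  interval [0, len e], the point 0 being ini e and the point len e being ter e.\<close>

definition edge_eig_sol :: "real \<Rightarrow> complex \<Rightarrow> (real \<Rightarrow> complex) \<Rightarrow> (real \<Rightarrow> complex) \<Rightarrow> bool" where
  "edge_eig_sol l z u u' \<longleftrightarrow>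
     (\<forall>x\<in>{0..l}. (u has_vector_derivative u' x) (at x within {0..l}) \<and>
                  (u' has_vector_derivative (- z * u x)) (at x within {0..l}))"

definition graph_vertices :: "'e set \<Rightarrow> ('e \<Rightarrow> 'v) \<Rightarrow> ('e \<Rightarrow> 'v) \<Rightarrow> 'v set" where
  "graph_vertices E ini ter = ini ` E \<union> ter ` E"

text \<open>Sum of the derivatives at vertex v taken in the directions pointing into the edges.\<close>
definition flux :: "'e set \<Rightarrow> ('e \<Rightarrow> real) \<Rightarrow> ('e \<Rightarrow> 'v) \<Rightarrow> ('e \<Rightarrow> 'v) \<Rightarrow> ('e \<Rightarrow> real \<Rightarrow> complex) \<Rightarrow> 'v \<Rightarrow> complex" where
  "flux E len ini ter U' v =
     (\<Sum>e\<in>{e\<in>E. ini e = v}. U' e 0) - (\<Sum>e\<in>{e\<in>E. ter e = v}. U' e (len e))"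

definition qg_solution :: "'e set \<Rightarrow> ('e \<Rightarrow> real) \<Rightarrow> ('e \<Rightarrow> 'v) \<Rightarrow> ('e \<Rightarrow> 'v) \<Rightarrow> 'v \<Rightarrow> complex
     \<Rightarrow> ('e \<Rightarrow> real \<Rightarrow> complex) \<Rightarrow> ('e \<Rightarrow> real \<Rightarrow> complex) \<Rightarrow> ('v \<Rightarrow> complex) \<Rightarrow> bool" where
  "qg_solution E len ini ter v0 z U U' phi \<longleftrightarrow>
     (\<forall>e\<in>E. edge_eig_sol (len e) z (U e) (U' e)) \<and>
     (\<forall>e\<in>E. U e 0 = phi (ini e) \<and> U e (len e) = phi (ter e)) \<and>
     (\<forall>v\<in>graph_vertices E ini ter. v \<noteq> v0 \<longrightarrow> flux E len ini ter U' v = 0)"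

definition is_M_value :: "'e set \<Rightarrow> ('e \<Rightarrow> real) \<Rightarrow> ('e \<Rightarrow> 'v) \<Rightarrow> ('e \<Rightarrow> 'v) \<Rightarrow> 'v \<Rightarrow> complex \<Rightarrow> complex \<Rightarrow> bool" where
  "is_M_value E len ini ter v0 z M \<longleftrightarrow>
     (\<exists>U U' phi. qg_solution E len ini ter v0 z U U' phi \<and> phi v0 = 1 \<and>
                 flux E len ini ter U' v0 = M)"

definition M_function :: "'e set \<Rightarrow> ('e \<Rightarrow> real) \<Rightarrow> ('e \<Rightarrow> 'v) \<Rightarrow> ('e \<Rightarrow> 'v) \<Rightarrow> 'v \<Rightarrow> complex \<Rightarrow> complex" where
  "M_function E len ini ter v0 z = (THE M. is_M_value E len ini ter v0 z M)"

text \<open>Chain of m loops: vertices 0..m; edges (i,b), i in {1..m}, b :: bool, join i-1 to i,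
  each of length L i / 2.\<close>
definition chain_edges :: "nat \<Rightarrow> (nat \<times> bool) set" where
  "chain_edges m = {1..m} \<times> UNIV"

definition chain_len :: "(nat \<Rightarrow> real) \<Rightarrow> nat \<times> bool \<Rightarrow> real" where
  "chain_len L e = L (fst e) / 2"

definition chain_ini :: "nat \<times> bool \<Rightarrow> nat" where
  "chain_ini e = fst e - 1"

definition chain_ter :: "nat \<times> bool \<Rightarrow> nat" where
  "chain_ter e = fst e"

end

theory Submission
  imports Defs
begin

lemma im_energy: "Im (cnj a * (- z * a) + cnj b * b) = - Im z * (cmod a)^2"
proof -
  have "cmod a * cmod a = (Re a)^2 + (Im a)^2" by (simp add: cmod_power2 power2_eq_square[symmetric])
  then show ?thesis by (simp add: algebra_simps power2_eq_square)
qed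

lemma edge_energy:
  fixes u u' :: "real \<Rightarrow> complex"
  assumes sol: "edge_eig_sol l z u u'" and l: "l > 0" and iz: "Im z \<noteq> 0"
  defines "f \<equiv> \<lambda>x. Im z * Im (cnj (u x) * u' x)"
  shows "f l \<le> f 0" and "f l = f 0 \<Longrightarrow> (\<forall>x\<in>{0..l}. u x = 0 \<and> u' x = 0)"
proof -
  define D where "D x = - (Im z * Im z) * (cmod (u x) * cmod (u x))" for x
  have der: "(f has_vector_derivative D x) (at x within {0..l})" if x: "x \<in> {0..l}" for x
  proof -
    from sol x have d1: "(u has_vector_derivative u' x) (at x within {0..l})"
      and d2: "(u' has_vector_derivative (- z * u x)) (at x within {0..l})"
      unfolding edge_eig_sol_def by auto
    have "((\<lambda>x. cnj (u x) * u' x) has_vector_derivative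
            (cnj (u x) * (- z * u x) + cnj (u' x) * u' x)) (at x within {0..l})"
      by (intro has_vector_derivative_mult has_vector_derivative_cnj d1 d2)
    from bounded_linear.has_vector_derivative[OF bounded_linear_Im this]
    have "((\<lambda>x. Im (cnj (u x) * u' x)) has_vector_derivative
            - Im z * (cmod (u x))^2) (at x within {0..l})"
      by (simp only: im_energy power2_eq_square)
    from bounded_linear.has_vector_derivative[OF bounded_linear_mult_right[of "Im z"] this]
    show ?thesis unfolding f_def D_def by (simp only: mult.assoc mult_minus_right mult_minus_left power2_eq_square)
  qed
  have Dle: "D x \<le> 0" for x unfolding D_def by simp
  have mono: "f b \<le> f a" if "0 \<le> a" "a \<le> b" "b \<le> l" for a b
  proof -
    have "\<exists>x\<in>{a..b}. f b - f a = (\<lambda>h. h *\<^sub>R D x) (b - a)"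
    proof (rule mvt_very_simple[OF \<open>a \<le> b\<close>])
      fix x assume "a \<le> x" "x \<le> b"
      then have "(f has_vector_derivative D x) (at x within {0..l})" using der that by auto
      then have "(f has_vector_derivative D x) (at x within {a..b})"
        by (rule has_vector_derivative_within_subset) (use that in auto)
      then show "(f has_derivative (\<lambda>h. h *\<^sub>R D x)) (at x within {a..b})"
        by (simp add: has_vector_derivative_def)
    qed
    then obtain x where "f b - f a = (b - a) * D x" by auto
    moreover have "(b - a) * D x \<le> 0" using Dle[of x] that by (simp add: mult_nonneg_nonpos)
    ultimately show ?thesis by linarith
  qed
  show "f l \<le> f 0" using mono[of 0 l] l by simp
  assume eq: "f l = f 0"
  have const: "f x = f 0" if "x \<in> {0..l}" for x
    using mono[of 0 x] mono[of x l] that eq by auto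
  have u0: "u x = 0" if x: "x \<in> {0..l}" for x
  proof -
    have c: "((\<lambda>_. f 0) has_vector_derivative 0) (at x within {0..l})" by simp
    have "(f has_vector_derivative 0) (at x within {0..l})"
      by (rule has_vector_derivative_transform[OF x _ c]) (use const in blast)
    then have "D x = 0"
      using vector_derivative_unique_within_closed_interval[of 0 l x f "D x" 0] der[OF x] l x by auto
    then show ?thesis using iz unfolding D_def by auto
  qed
  show "\<forall>x\<in>{0..l}. u x = 0 \<and> u' x = 0"
  proof
    fix x assume x: "x \<in> {0..l}"
    have c: "((\<lambda>_. 0) has_vector_derivative 0) (at x within {0..l})" by simp
    have "(u has_vector_derivative 0) (at x within {0..l})"
      by (rule has_vector_derivative_transform[OF x _ c]) (use u0 in auto)
    moreover have "(u has_vector_derivative u' x) (at x within {0..l})"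
      using sol x unfolding edge_eig_sol_def by auto
    ultimately have "u' x = 0"
      using vector_derivative_unique_within_closed_interval[of 0 l x u "u' x" 0] l x by auto
    then show "u x = 0 \<and> u' x = 0" using u0 x by auto
  qed
qed

lemma regroup:
  fixes g :: "'v \<Rightarrow> complex" and k :: "'e \<Rightarrow> complex"
  assumes "finite E" "h ` E \<subseteq> V" "finite V"
  shows "(\<Sum>e\<in>E. g (h e) * k e) = (\<Sum>v\<in>V. g v * (\<Sum>e\<in>{e\<in>E. h e = v}. k e))"
proof -
  have "(\<Sum>e\<in>E. g (h e) * k e) = (\<Sum>v\<in>h ` E. \<Sum>e\<in>{e\<in>E. h e = v}. g (h e) * k e)"
    by (rule sum.image_gen[OF assms(1)])
  also have "\<dots> = (\<Sum>v\<in>h ` E. g v * (\<Sum>e\<in>{e\<in>E. h e = v}. k e))"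
  proof (rule sum.cong[OF refl])
    fix v assume "v \<in> h ` E"
    have "(\<Sum>e\<in>{e\<in>E. h e = v}. g (h e) * k e) = (\<Sum>e\<in>{e\<in>E. h e = v}. g v * k e)"
      by (rule sum.cong) auto
    then show "(\<Sum>e\<in>{e\<in>E. h e = v}. g (h e) * k e) = g v * (\<Sum>e\<in>{e\<in>E. h e = v}. k e)"
      by (simp only: sum_distrib_left)
  qed
  also have "\<dots> = (\<Sum>v\<in>V. g v * (\<Sum>e\<in>{e\<in>E. h e = v}. k e))"
  proof (rule sum.mono_neutral_left[OF assms(3) assms(2)])
    show "\<forall>i\<in>V - h ` E. g i * (\<Sum>e\<in>{e\<in>E. h e = i}. k e) = 0"
    proof
      fix i assume "i \<in> V - h ` E"
      then have "{e\<in>E. h e = i} = {}" by auto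
      then show "g i * (\<Sum>e\<in>{e\<in>E. h e = i}. k e) = 0" by (metis mult_zero_right sum.empty)
    qed
  qed
  finally show ?thesis .
qed

lemma zero_flux:
  assumes fin: "finite E" and len: "\<forall>e\<in>E. len e > 0" and iz: "Im z \<noteq> 0"
    and sol: "qg_solution E len ini ter v0 z U U' phi" and p0: "phi v0 = 0"
  shows "flux E len ini ter U' v0 = 0"
proof -
  define V where "V = graph_vertices E ini ter"
  have finV: "finite V" using fin by (simp add: V_def graph_vertices_def)
  define f where "f e x = Im z * Im (cnj (U e x) * U' e x)" for e x
  have es: "edge_eig_sol (len e) z (U e) (U' e)" if "e \<in> E" for e
    using sol that unfolding qg_solution_def by auto
  have bd: "U e 0 = phi (ini e) \<and> U e (len e) = phi (ter e)" if "e \<in> E" for e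
    using sol that unfolding qg_solution_def by auto
  have le: "f e (len e) \<le> f e 0" if "e \<in> E" for e
    using edge_energy(1)[OF es[OF that]] len that iz unfolding f_def by auto
  have A: "(\<Sum>e\<in>E. cnj (phi (ini e)) * U' e 0) - (\<Sum>e\<in>E. cnj (phi (ter e)) * U' e (len e))
     = (\<Sum>v\<in>V. cnj (phi v) * flux E len ini ter U' v)"
    unfolding flux_def right_diff_distrib sum_subtractf
    by (subst regroup[OF fin _ finV], force simp: V_def graph_vertices_def)+ (rule refl)
  also have "\<dots> = 0"
    using sol p0 unfolding qg_solution_def V_def by (intro sum.neutral) auto
  finally have A0: "(\<Sum>e\<in>E. cnj (phi (ini e)) * U' e 0) - (\<Sum>e\<in>E. cnj (phi (ter e)) * U' e (len e)) = 0" .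
  have "(\<Sum>e\<in>E. f e (len e) - f e 0) = Im z * Im ((\<Sum>e\<in>E. cnj (phi (ter e)) * U' e (len e)) - (\<Sum>e\<in>E. cnj (phi (ini e)) * U' e 0))"
    unfolding f_def using bd by (simp add: sum_subtractf sum_distrib_left right_diff_distrib Im_sum)
  also have "\<dots> = 0" using A0 by simp
  finally have S0: "(\<Sum>e\<in>E. f e (len e) - f e 0) = 0" .
  have eq: "f e (len e) = f e 0" if "e \<in> E" for e
  proof -
    have "(\<Sum>e\<in>E. f e 0 - f e (len e)) = 0" using S0 by (simp add: sum_subtractf)
    then have "\<forall>e\<in>E. f e 0 - f e (len e) = 0"
      using sum_nonneg_eq_0_iff[OF fin, of "\<lambda>e. f e 0 - f e (len e)"] le by auto
    then show ?thesis using that by auto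
  qed
  have z: "U' e 0 = 0 \<and> U' e (len e) = 0" if e: "e \<in> E" for e
  proof -
    have lp: "len e > 0" using len e by auto
    have "f e (len e) = f e 0" by (rule eq[OF e])
    then have "\<forall>x\<in>{0..len e}. U e x = 0 \<and> U' e x = 0"
      unfolding f_def by (rule edge_energy(2)[OF es[OF e] lp iz])
    then show ?thesis using lp by auto
  qed
  show ?thesis unfolding flux_def using z by simp
qed

lemma M_unique:
  assumes fin: "finite E" and len: "\<forall>e\<in>E. len e > 0" and iz: "Im z \<noteq> 0"
    and m1: "is_M_value E len ini ter v0 z M1" and m2: "is_M_value E len ini ter v0 z M2"
  shows "M1 = M2"
proof -
  obtain U1 U1' phi1 where s1: "qg_solution E len ini ter v0 z U1 U1' phi1" "phi1 v0 = 1"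
    "flux E len ini ter U1' v0 = M1" using m1 unfolding is_M_value_def by auto
  obtain U2 U2' phi2 where s2: "qg_solution E len ini ter v0 z U2 U2' phi2" "phi2 v0 = 1"
    "flux E len ini ter U2' v0 = M2" using m2 unfolding is_M_value_def by auto
  have fl: "flux E len ini ter (\<lambda>e x. U1' e x - U2' e x) v = flux E len ini ter U1' v - flux E len ini ter U2' v" for v
    unfolding flux_def by (simp add: sum_subtractf)
  have "qg_solution E len ini ter v0 z (\<lambda>e x. U1 e x - U2 e x) (\<lambda>e x. U1' e x - U2' e x) (\<lambda>v. phi1 v - phi2 v)"
    unfolding qg_solution_def
  proof (intro conjI ballI impI)
    fix e assume e: "e \<in> E"
    show "edge_eig_sol (len e) z (\<lambda>x. U1 e x - U2 e x) (\<lambda>x. U1' e x - U2' e x)"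
      unfolding edge_eig_sol_def
    proof
      fix x assume x: "x \<in> {0..len e}"
      have a: "(U1 e has_vector_derivative U1' e x) (at x within {0..len e})"
        "(U1' e has_vector_derivative - z * U1 e x) (at x within {0..len e})"
        using s1(1) e x unfolding qg_solution_def edge_eig_sol_def by auto
      have b: "(U2 e has_vector_derivative U2' e x) (at x within {0..len e})"
        "(U2' e has_vector_derivative - z * U2 e x) (at x within {0..len e})"
        using s2(1) e x unfolding qg_solution_def edge_eig_sol_def by auto
      show "((\<lambda>x. U1 e x - U2 e x) has_vector_derivative U1' e x - U2' e x) (at x within {0..len e}) \<and>
        ((\<lambda>x. U1' e x - U2' e x) has_vector_derivative - z * (U1 e x - U2 e x)) (at x within {0..len e})"
        using has_vector_derivative_diff[OF a(1) b(1)] has_vector_derivative_diff[OF a(2) b(2)]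
        by (simp add: algebra_simps)
    qed
    show "U1 e 0 - U2 e 0 = phi1 (ini e) - phi2 (ini e)"
      "U1 e (len e) - U2 e (len e) = phi1 (ter e) - phi2 (ter e)"
      using s1(1) s2(1) e unfolding qg_solution_def by auto
  next
    fix v assume "v \<in> graph_vertices E ini ter" "v \<noteq> v0"
    then show "flux E len ini ter (\<lambda>e x. U1' e x - U2' e x) v = 0"
      using s1(1) s2(1) unfolding fl qg_solution_def by auto
  qed
  from zero_flux[OF fin len iz this] s1 s2 show ?thesis unfolding fl by simp
qed

lemma sol_shift:
  fixes k z c :: complex and b l :: real
  assumes "k^2 = z" "c \<noteq> 0"
  shows "edge_eig_sol l z (\<lambda>x. cos (k * of_real (x + b)) / c) (\<lambda>x. - k * sin (k * of_real (x + b)) / c)"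
  unfolding edge_eig_sol_def
proof (intro ballI conjI)
  fix x :: real
  have d1: "((\<lambda>w. cos (k * (w + of_real b)) / c) has_field_derivative (- k * sin (k * (of_real x + of_real b)) / c)) (at (of_real x))"
    using assms(2) by (auto intro!: derivative_eq_intros)
  have d2: "((\<lambda>w. - k * sin (k * (w + of_real b)) / c) has_field_derivative (- k * (k * cos (k * (of_real x + of_real b))) / c)) (at (of_real x))"
    using assms(2) by (auto intro!: derivative_eq_intros)
  from has_vector_derivative_real_field[OF d1, of "{0..l}"]
  show "((\<lambda>x. cos (k * of_real (x + b)) / c) has_vector_derivative (- k * sin (k * of_real (x + b)) / c)) (at x within {0..l})"
    by simp
  from has_vector_derivative_real_field[OF d2, of "{0..l}"]
  have "((\<lambda>x. - k * sin (k * of_real (x + b)) / c) has_vector_derivative (- k * (k * cos (k * (of_real x + of_real b))) / c)) (at x within {0..l})"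
    by simp
  moreover have "- k * (k * cos (k * (of_real x + of_real b))) / c = - z * (cos (k * of_real (x + b)) / c)"
    using assms(1) by (simp add: power2_eq_square algebra_simps)
  ultimately show "((\<lambda>x. - k * sin (k * of_real (x + b)) / c) has_vector_derivative - z * (cos (k * of_real (x + b)) / c)) (at x within {0..l})"
    by metis
qed

lemma cos_nz:
  fixes z :: complex and a :: real
  assumes "Im z \<noteq> 0" "a \<noteq> 0"
  shows "cos (csqrt z * of_real a) \<noteq> 0"
proof
  assume "cos (csqrt z * of_real a) = 0"
  then obtain n :: int where n: "csqrt z * of_real a = of_real (n * pi) + of_real pi / 2"
    unfolding cos_eq_0 by blast
  have "Im (csqrt z * of_real a) = 0" unfolding n by simp
  then have "Im (csqrt z) = 0" using assms(2) by simp
  moreover have "Im ((csqrt z)^2) = 2 * Re (csqrt z) * Im (csqrt z)" by (rule Im_power2)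
  ultimately show False using assms(1) by (metis power2_csqrt mult_zero_right)
qed

lemma loop_M:
  fixes z :: complex and Lt :: real
  assumes iz: "Im z \<noteq> 0" and Lt: "Lt > 0"
  defines "k \<equiv> csqrt z"
  defines "c \<equiv> cos (k * of_real (Lt / 2))"
  shows "is_M_value {()} (\<lambda>_. Lt) (\<lambda>_. ()) (\<lambda>_. ()) () z (2 * k * sin (k * of_real (Lt / 2)) / c)"
proof -
  have c0: "c \<noteq> 0" unfolding c_def k_def using cos_nz[OF iz, of "Lt/2"] Lt by simp
  have k2: "k^2 = z" unfolding k_def by simp
  define U where "U = (\<lambda>(e::unit) x. cos (k * of_real (x + (- Lt/2))) / c)"
  define U' where "U' = (\<lambda>(e::unit) x. - k * sin (k * of_real (x + (- Lt/2))) / c)"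
  have sol: "qg_solution {()} (\<lambda>_. Lt) (\<lambda>_. ()) (\<lambda>_. ()) () z U U' (\<lambda>_. 1)"
    unfolding qg_solution_def
  proof (intro conjI ballI impI)
    fix e :: unit
    show "edge_eig_sol Lt z (U e) (U' e)" unfolding U_def U'_def by (rule sol_shift[OF k2 c0])
    show "U e 0 = 1" unfolding U_def using c0
      by (simp add: c_def of_real_minus of_real_divide)
    show "U e Lt = 1" unfolding U_def using c0
      by (simp add: c_def field_simps)
  next
    fix v :: unit assume "v \<noteq> ()" then show "flux {()} (\<lambda>_. Lt) (\<lambda>_. ()) (\<lambda>_. ()) U' v = 0" by simp
  qed
  have "flux {()} (\<lambda>_. Lt) (\<lambda>_. ()) (\<lambda>_. ()) U' () = 2 * k * sin (k * of_real (Lt / 2)) / c"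
    unfolding flux_def U'_def by (simp add: field_simps)
  then show ?thesis unfolding is_M_value_def using sol by blast
qed

lemma chain_M:
  fixes m :: nat and L :: "nat \<Rightarrow> real" and z :: complex
  assumes m: "m \<ge> 1" and Lpos: "\<forall>i\<in>{1..m}. L i > 0" and iz: "Im z \<noteq> 0"
  defines "Lt \<equiv> \<Sum>i=1..m. L i"
  defines "k \<equiv> csqrt z"
  defines "c \<equiv> cos (k * of_real (Lt / 2))"
  shows "is_M_value (chain_edges m) (chain_len L) chain_ini chain_ter (0::nat) z
           (2 * k * sin (k * of_real (Lt / 2)) / c)"
proof -
  have Ltpos: "Lt > 0" unfolding Lt_def using Lpos m by (intro sum_pos) auto
  have c0: "c \<noteq> 0" unfolding c_def k_def using cos_nz[OF iz, of "Lt/2"] Ltpos by simp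
  have k2: "k^2 = z" unfolding k_def by simp
  define S where "S j = (\<Sum>i=1..j. L i) / 2" for j
  have S0: "S 0 = 0" unfolding S_def by simp
  have Sm: "S m = Lt / 2" unfolding S_def Lt_def by simp
  have Sstep: "S i = S (i - 1) + L i / 2" if i1: "i \<ge> 1" for i
  proof -
    obtain j where j: "i = Suc j" using i1 by (cases i) auto
    show ?thesis unfolding S_def j by (simp add: sum.cl_ivl_Suc field_simps)
  qed
  define U where "U = (\<lambda>(e::nat\<times>bool) x. cos (k * of_real (x + (S (fst e - 1) - Lt/2))) / c)"
  define U' where "U' = (\<lambda>(e::nat\<times>bool) x. - k * sin (k * of_real (x + (S (fst e - 1) - Lt/2))) / c)"
  define phi where "phi = (\<lambda>v. cos (k * of_real (S v - Lt/2)) / c)"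
  have iniset: "{e \<in> chain_edges m. chain_ini e = v} = (if v < m then {(v+1,True),(v+1,False)} else {})" for v
  proof -
    have "{e \<in> chain_edges m. chain_ini e = v} = {e. fst e = v + 1 \<and> v + 1 \<le> m}"
      unfolding chain_edges_def chain_ini_def by auto
    also have "\<dots> = (if v < m then {(v+1,True),(v+1,False)} else {})"
      by (auto; case_tac b; auto)
    finally show ?thesis .
  qed
  have terset: "{e \<in> chain_edges m. chain_ter e = v} = {(v,True),(v,False)}" if "1 \<le> v" "v \<le> m" for v
  proof -
    have "{e \<in> chain_edges m. chain_ter e = v} = {e. fst e = v}"
      unfolding chain_edges_def chain_ter_def using that by auto
    also have "\<dots> = {(v,True),(v,False)}"
      by (auto; case_tac b; auto)
    finally show ?thesis .
  qed
  have terset0: "{e \<in> chain_edges m. chain_ter e = 0} = {}"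
    unfolding chain_edges_def chain_ter_def by auto
  have sol: "qg_solution (chain_edges m) (chain_len L) chain_ini chain_ter 0 z U U' phi"
    unfolding qg_solution_def
  proof (intro conjI ballI impI)
    fix e assume e: "e \<in> chain_edges m"
    then have e1: "fst e \<ge> 1" unfolding chain_edges_def by auto
    show "edge_eig_sol (chain_len L e) z (U e) (U' e)"
      unfolding U_def U'_def by (rule sol_shift[OF k2 c0])
    show "U e 0 = phi (chain_ini e)" unfolding U_def phi_def chain_ini_def by simp
    have "chain_len L e + (S (fst e - 1) - Lt / 2) = S (fst e) - Lt/2"
      using Sstep[OF e1] unfolding chain_len_def by simp
    then show "U e (chain_len L e) = phi (chain_ter e)" by (simp only: U_def phi_def chain_ter_def)
  next
    fix v assume v: "v \<in> graph_vertices (chain_edges m) chain_ini chain_ter" "v \<noteq> 0"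
    then have v1: "1 \<le> v" "v \<le> m"
      unfolding graph_vertices_def chain_edges_def chain_ini_def chain_ter_def by auto
    have eqS: "L v / 2 + (S (v - 1) - Lt / 2) = S v - Lt / 2" using Sstep[OF v1(1)] by simp
    have W: "U' (v,b) (chain_len L (v,b)) = - k * sin (k * of_real (S v - Lt/2)) / c" for b
      by (simp only: U'_def chain_len_def fst_conv eqS)
    have W2: "U' (v+1,b) 0 = - k * sin (k * of_real (S v - Lt/2)) / c" for b
      by (simp only: U'_def fst_conv add_diff_cancel_right' add_0)
    show "flux (chain_edges m) (chain_len L) chain_ini chain_ter U' v = 0"
    proof (cases "v < m")
      case True
      then show ?thesis unfolding flux_def iniset terset[OF v1] using W W2 by simp
    next
      case False
      then have "v = m" using v1 by simp
      then have z0: "S v - Lt/2 = 0" using Sm by simp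
      have "U' (v,b) (chain_len L (v,b)) = 0" for b
        by (simp only: W z0 of_real_0 mult_zero_right sin_zero div_0)
      then show ?thesis unfolding flux_def iniset terset[OF v1] using False by simp
    qed
  qed
  have "flux (chain_edges m) (chain_len L) chain_ini chain_ter U' 0 = 2 * k * sin (k * of_real (Lt / 2)) / c"
    unfolding flux_def iniset terset0 U'_def using m S0 by (simp add: field_simps)
  moreover have "phi 0 = 1" unfolding phi_def using S0 c0 by (simp add: c_def)
  ultimately show ?thesis unfolding is_M_value_def using sol by blast
qed

theorem theorem3:
  fixes m :: nat and L :: "nat \<Rightarrow> real" and z :: complex
  assumes "m \<ge> 1" and "\<forall>i\<in>{1..m}. L i > 0" and "Im z \<noteq> 0"
  shows "M_function (chain_edges m) (chain_len L) chain_ini chain_ter (0::nat) z =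
         M_function {()} (\<lambda>_. \<Sum>i=1..m. L i) (\<lambda>_. ()) (\<lambda>_. ()) () z"
proof -
  define Lt where "Lt = (\<Sum>i=1..m. L i)"
  define M where "M = 2 * csqrt z * sin (csqrt z * of_real (Lt / 2)) / cos (csqrt z * of_real (Lt / 2))"
  have Ltpos: "Lt > 0" unfolding Lt_def using assms by (intro sum_pos) auto
  have c1: "is_M_value (chain_edges m) (chain_len L) chain_ini chain_ter (0::nat) z M"
    using chain_M[OF assms] unfolding M_def Lt_def .
  have fin: "finite (chain_edges m)" unfolding chain_edges_def by simp
  have lenp: "\<forall>e\<in>chain_edges m. chain_len L e > 0"
    using assms(2) unfolding chain_edges_def chain_len_def by auto
  have "M_function (chain_edges m) (chain_len L) chain_ini chain_ter (0::nat) z = M"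
    unfolding M_function_def
    using the_equality[of "is_M_value (chain_edges m) (chain_len L) chain_ini chain_ter (0::nat) z" M, OF c1]
      M_unique[OF fin lenp assms(3) _ c1] by blast
  moreover have c2: "is_M_value {()} (\<lambda>_. Lt) (\<lambda>_. ()) (\<lambda>_. ()) () z M"
    using loop_M[OF assms(3) Ltpos] unfolding M_def .
  have "M_function {()} (\<lambda>_. Lt) (\<lambda>_. ()) (\<lambda>_. ()) () z = M"
    unfolding M_function_def
    using the_equality[of "is_M_value {()} (\<lambda>_. Lt) (\<lambda>_. ()) (\<lambda>_. ()) () z" M, OF c2]
      M_unique[OF _ _ assms(3) _ c2] Ltpos by blast
  ultimately show ?thesis unfolding Lt_def by simp
qed

end
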